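(* Let $n\ge 2$ and $2\le m\le n$ be integers and let $\alpha\in(0,2]$. Define the $n$-qubit observables $\mathcal{M}_Z=(|0\rangle\langle 0|)^{\otimes n}+(|1\rangle\langle 1|)^{\otimes n}$ and $\mathcal{M}_X=\sigma_x^{\otimes n}$, where $\sigma_x=|0\rangle\langle 1|+|1\rangle\langle 0|$, and let $\mathcal{W}^n_{se}(\alpha)=\alpha\mathcal{M}_Z+\mathcal{M}_X$. Then for every $m$-separable $n$-qubit state $\rho$, $$\operatorname{Tr}\big[\rho\,\mathcal{W}^n_{se}(\alpha)\big]\le \max\Big\{\alpha,\ \frac{\alpha}{2^{m-1}}+1\Big\}.$$
   Context: $\{|0\rangle,|1\rangle\}$ is the computational basis of $\mathbb{C}^2$. An $n$-qubit pure state $|\phi\rangle$ is $m$-separable if the $n$ qubits can be partitioned into $m$ nonempty disjoint subsets $\mathcal{G}_1,\dots,\mathcal{G}_m$ such that $|\phi\rangle=\bigotimes_{i=1}^m|\psi_{\mathcal{G}_i}\rangle$ with $|\psi_{\mathcal{G}_i}\rangle$ a pure state of the qubits in $\mathcal{G}_i$. A mixed $n$-qubit state $\rho$ is $m$-separable if it is a convex combination of projectors onto $m$-separable pure states (the partitions may differ between terms). *)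

theory Defs
  imports Complex_Main "Jordan_Normal_Form.Matrix"
begin

text \<open>Computational basis of n qubits: basis index x < 2^n; qubit k of basis state x
  is bit k of x (True = |1>, False = |0>).\<close>
definition qbit :: "nat \<Rightarrow> nat \<Rightarrow> bool" where
  "qbit x k = odd (x div 2 ^ k)"

text \<open>Tensor power A^{\<otimes> n} of a 2x2 matrix A (indices 0 = |0>, 1 = |1>).\<close>
definition tensor_pow :: "complex mat \<Rightarrow> nat \<Rightarrow> complex mat" where
  "tensor_pow A n = mat (2 ^ n) (2 ^ n)
     (\<lambda>(i, j). \<Prod>k<n. A $$ (of_bool (qbit i k), of_bool (qbit j k)))"

definition ket0bra0 :: "complex mat" where "ket0bra0 = mat 2 2 (\<lambda>(i,j). if i = 0 \<and> j = 0 then 1 else 0)"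
definition ket1bra1 :: "complex mat" where "ket1bra1 = mat 2 2 (\<lambda>(i,j). if i = 1 \<and> j = 1 then 1 else 0)"
definition sigma_x :: "complex mat" where "sigma_x = mat 2 2 (\<lambda>(i,j). if i \<noteq> j then 1 else 0)"

definition M_Z :: "nat \<Rightarrow> complex mat" where
  "M_Z n = tensor_pow ket0bra0 n + tensor_pow ket1bra1 n"

definition M_X :: "nat \<Rightarrow> complex mat" where
  "M_X n = tensor_pow sigma_x n"

definition W_se :: "nat \<Rightarrow> real \<Rightarrow> complex mat" where
  "W_se n \<alpha> = complex_of_real \<alpha> \<cdot>\<^sub>m M_Z n + M_X n"

definition mat_trace :: "complex mat \<Rightarrow> complex" where
  "mat_trace A = (\<Sum>i<dim_row A. A $$ (i, i))"

definition pure_state :: "nat \<Rightarrow> complex vec \<Rightarrow> bool" where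
  "pure_state n v \<longleftrightarrow> dim_vec v = 2 ^ n \<and> (\<Sum>x<2 ^ n. (cmod (v $ x))\<^sup>2) = 1"

text \<open>m-separable pure state: qubits {0..<n} partitioned into m nonempty disjoint groups G 0,..,G (m-1),
  and the amplitude is a product of amplitudes phi j of the group states, each depending only on the
  qubits of group j.\<close>
definition m_separable_pure :: "nat \<Rightarrow> nat \<Rightarrow> complex vec \<Rightarrow> bool" where
  "m_separable_pure n m v \<longleftrightarrow> pure_state n v \<and>
     (\<exists>(G :: nat \<Rightarrow> nat set) (\<phi> :: nat \<Rightarrow> (nat \<Rightarrow> bool) \<Rightarrow> complex).
        (\<forall>j<m. G j \<noteq> {}) \<and>
        (\<forall>j<m. \<forall>j'<m. j \<noteq> j' \<longrightarrow> G j \<inter> G j' = {}) \<and>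
        (\<Union>j<m. G j) = {0..<n} \<and>
        (\<forall>x<2 ^ n. v $ x = (\<Prod>j<m. \<phi> j (\<lambda>k. if k \<in> G j then qbit x k else False))))"

definition proj :: "complex vec \<Rightarrow> complex mat" where
  "proj v = mat (dim_vec v) (dim_vec v) (\<lambda>(i, j). v $ i * cnj (v $ j))"

definition m_separable :: "nat \<Rightarrow> nat \<Rightarrow> complex mat \<Rightarrow> bool" where
  "m_separable n m \<rho> \<longleftrightarrow>
     (\<exists>(K :: nat) (p :: nat \<Rightarrow> real) (v :: nat \<Rightarrow> complex vec).
        (\<forall>k<K. p k \<ge> 0) \<and> (\<Sum>k<K. p k) = 1 \<and>
        (\<forall>k<K. m_separable_pure n m (v k)) \<and>
        \<rho> = mat (2 ^ n) (2 ^ n) (\<lambda>(i, j). \<Sum>k<K. complex_of_real (p k) * proj (v k) $$ (i, j)))"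

end

theory Submission
  imports Defs
begin

unbundle bit_operations_syntax



lemma qbit_bit: "qbit x k = bit x k"
  by (simp add: qbit_def bit_iff_odd)

lemma bit_lt_pow: "(x::nat) < 2^n \<Longrightarrow> bit x k \<Longrightarrow> k < n"
proof -
  assume a: "x < 2^n" "bit x k"
  have "take_bit n x = x" using a(1) by (simp add: take_bit_nat_eq_self_iff)
  then show ?thesis using a(2) by (metis bit_take_bit_iff)
qed

definition bnum :: "nat \<Rightarrow> (nat \<Rightarrow> bool) \<Rightarrow> nat" where
  "bnum n f = horner_sum of_bool 2 (map f [0..<n])"

lemma bit_bnum: "bit (bnum n f) k \<longleftrightarrow> k < n \<and> f k"
  by (auto simp: bnum_def bit_horner_sum_bit_iff possible_bit_def)

lemma bnum_lt: "bnum n f < 2^n"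
proof -
  have "take_bit n (bnum n f) = bnum n f"
    by (simp add: bnum_def take_bit_horner_sum_bit_eq)
  then show ?thesis by (metis take_bit_nat_less_exp)
qed

lemma bit_comp:
  assumes "(x::nat) < 2^n"
  shows "bit (2^n - 1 - x) k \<longleftrightarrow> k < n \<and> \<not> bit x k"
proof -
  define y where "y = bnum n (\<lambda>k. \<not> bit x k)"
  have "x AND y = 0" by (rule bit_eqI) (auto simp: bit_and_iff y_def bit_bnum)
  then have "x + y = x OR y" by (rule disjunctive_add_eq_or)
  also have "\<dots> = mask n"
    by (rule bit_eqI) (auto simp: bit_or_iff y_def bit_bnum bit_mask_iff possible_bit_def dest: bit_lt_pow[OF assms])
  finally have "y = 2^n - 1 - x" by (simp add: mask_eq_exp_minus_1)
  then show ?thesis by (metis y_def bit_bnum)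
qed

lemma bits_eq: "(x::nat) < 2^n \<Longrightarrow> y < 2^n \<Longrightarrow> (\<forall>k<n. bit x k = bit y k) \<Longrightarrow> x = y"
  by (rule bit_eqI) (metis bit_lt_pow)



lemma prod_if01: "(\<Prod>k<(n::nat). if P k then 1 else 0 :: complex) = (if \<forall>k<n. P k then 1 else 0)"
  by (induction n) (auto simp: less_Suc_eq)

lemma tensor_idx: "i < 2^n \<Longrightarrow> j < 2^n \<Longrightarrow>
  tensor_pow A n $$ (i,j) = (\<Prod>k<n. A $$ (of_bool (bit i k), of_bool (bit j k)))"
  by (simp add: tensor_pow_def qbit_bit)

lemma sx_idx: "sigma_x $$ (of_bool a, of_bool b) = (if a \<noteq> b then 1 else 0)"
  by (cases a; cases b) (simp_all add: sigma_x_def)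
lemma k0_idx: "ket0bra0 $$ (of_bool a, of_bool b) = (if \<not>a \<and> \<not>b then 1 else 0)"
  by (cases a; cases b) (simp_all add: ket0bra0_def)
lemma k1_idx: "ket1bra1 $$ (of_bool a, of_bool b) = (if a \<and> b then 1 else 0)"
  by (cases a; cases b) (simp_all add: ket1bra1_def)

lemma bit_N: "bit ((2::nat)^n - 1) k \<longleftrightarrow> k < n"
  using bit_comp[of 0 n k] by simp

lemma bit_comp': "(x::nat) < 2^n \<Longrightarrow> bit (2^n - Suc x) k \<longleftrightarrow> k < n \<and> \<not> bit x k"
  using bit_comp[of x n k] by simp

lemma MX_idx: assumes "i < 2^n" "j < 2^n"
  shows "M_X n $$ (i,j) = (if j = 2^n - 1 - i then 1 else 0)"
proof -
  have "(\<forall>k<n. bit i k \<noteq> bit j k) \<longleftrightarrow> j = 2^n - 1 - i"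
  proof
    assume "\<forall>k<n. bit i k \<noteq> bit j k"
    then show "j = 2^n - 1 - i"
      by (intro bits_eq[OF assms(2)]) (auto simp: bit_comp'[OF assms(1)])
  next
    assume "j = 2^n - 1 - i"
    then show "\<forall>k<n. bit i k \<noteq> bit j k" by (simp add: bit_comp'[OF assms(1)])
  qed
  then show ?thesis
    by (simp add: M_X_def tensor_idx[OF assms] sx_idx prod_if01)
qed

lemma MZ_idx: assumes "i < 2^n" "j < 2^n"
  shows "M_Z n $$ (i,j) = (if i = 0 \<and> j = 0 then 1 else 0) + (if i = 2^n-1 \<and> j = 2^n-1 then 1 else 0)"
proof -
  have z: "x < 2^n \<Longrightarrow> (\<forall>k<n. \<not> bit x k) \<longleftrightarrow> x = 0" for x :: nat
    using bits_eq[of x n 0] by auto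
  have o: "x < 2^n \<Longrightarrow> (\<forall>k<n. bit x k) \<longleftrightarrow> x = 2^n - 1" for x :: nat
    using bits_eq[of x n "2^n-1"] bit_N[of n] by auto
  have 1: "(\<forall>k<n. \<not> bit i k \<and> \<not> bit j k) \<longleftrightarrow> i = 0 \<and> j = 0" using z assms by blast
  have 2: "(\<forall>k<n. bit i k \<and> bit j k) \<longleftrightarrow> i = 2^n-1 \<and> j = 2^n-1" using o assms by blast
  have d: "dim_row (tensor_pow A n) = 2^n" "dim_col (tensor_pow A n) = 2^n" for A
    by (simp_all add: tensor_pow_def)
  have "M_Z n $$ (i,j) = tensor_pow ket0bra0 n $$ (i,j) + tensor_pow ket1bra1 n $$ (i,j)"
    unfolding M_Z_def using assms d by (subst index_add_mat) auto
  also have "\<dots> = (if i = 0 \<and> j = 0 then 1 else 0) + (if i = 2^n-1 \<and> j = 2^n-1 then 1 else 0)"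
    unfolding tensor_idx[OF assms] k0_idx k1_idx prod_if01 1 2 by simp
  finally show ?thesis .
qed

lemma W_idx: assumes "i < 2^n" "j < 2^n"
  shows "W_se n \<alpha> $$ (i,j) = complex_of_real \<alpha> * ((if i = 0 \<and> j = 0 then 1 else 0) + (if i = 2^n-1 \<and> j = 2^n-1 then 1 else 0))
     + (if j = 2^n - 1 - i then 1 else 0)"
proof -
  have d: "dim_row (M_Z n) = 2^n" "dim_col (M_Z n) = 2^n" "dim_row (M_X n) = 2^n" "dim_col (M_X n) = 2^n"
    by (simp_all add: M_Z_def M_X_def tensor_pow_def)
  show ?thesis unfolding W_se_def using assms d
    by (simp only: index_add_mat index_smult_mat MX_idx[OF assms] MZ_idx[OF assms])
qed

definition flipn :: "nat \<Rightarrow> nat \<Rightarrow> nat" where "flipn n x = 2^n - 1 - x"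

definition ee :: "nat \<Rightarrow> real \<Rightarrow> complex vec \<Rightarrow> complex" where
  "ee n \<alpha> v = (\<Sum>i<2^n. \<Sum>l<2^n. v$i * cnj (v$l) * W_se n \<alpha> $$ (l,i))"

lemma flipn_lt: "flipn n x < 2^n"
  by (simp add: flipn_def)

lemma ee_inner: assumes l: "l < 2^n"
  shows "(\<Sum>i<2^n. v$i * cnj (v$l) * W_se n \<alpha> $$ (l,i)) =
    (if l = 0 then complex_of_real \<alpha> * (v$0 * cnj (v$0)) else 0)
    + (if l = 2^n-1 then complex_of_real \<alpha> * (v$(2^n-1) * cnj (v$(2^n-1))) else 0)
    + v$(flipn n l) * cnj (v$l)" (is "_ = ?R")
proof -
  let ?N = "2^n - 1 :: nat"
  have N: "?N < 2^n" by simp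
  have "(\<Sum>i<2^n. v$i * cnj (v$l) * W_se n \<alpha> $$ (l,i)) =
    (\<Sum>i<2^n. (if l = 0 then (if i = 0 then complex_of_real \<alpha> * (v$0 * cnj (v$0)) else 0) else 0)
      + (if l = ?N then (if i = ?N then complex_of_real \<alpha> * (v$?N * cnj (v$?N)) else 0) else 0)
      + (if i = flipn n l then v$(flipn n l) * cnj (v$l) else 0))"
    by (rule sum.cong) (auto simp: W_idx[OF l] flipn_def algebra_simps)
  also have "\<dots> = ?R" using l N by (cases "l = 0"; cases "l = ?N") (simp_all add: sum.distrib flipn_lt le_Suc_eq flipn_def)
  finally show ?thesis .
qed

lemma ee_eq: "ee n \<alpha> v = complex_of_real \<alpha> * (v$0 * cnj (v$0))
   + complex_of_real \<alpha> * (v$(2^n-1) * cnj (v$(2^n-1))) + (\<Sum>l<2^n. v$(flipn n l) * cnj (v$l))" (is "_ = ?R")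
proof -
  have N: "(2::nat)^n - 1 < 2^n" by simp
  have "ee n \<alpha> v = (\<Sum>l<2^n. \<Sum>i<2^n. v$i * cnj (v$l) * W_se n \<alpha> $$ (l,i))"
    unfolding ee_def by (rule sum.swap)
  also have "\<dots> = (\<Sum>l<2^n. (if l = 0 then complex_of_real \<alpha> * (v$0 * cnj (v$0)) else 0)
    + (if l = 2^n-1 then complex_of_real \<alpha> * (v$(2^n-1) * cnj (v$(2^n-1))) else 0)
    + v$(flipn n l) * cnj (v$l))"
    by (rule sum.cong) (simp_all add: ee_inner)
  also have "\<dots> = ?R" using N by (simp add: sum.distrib)
  finally show ?thesis .
qed

lemma Re_ee: "Re (ee n \<alpha> v) \<le> \<alpha> * ((cmod (v$0))^2 + (cmod (v$(2^n-1)))^2)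
   + (\<Sum>l<2^n. cmod (v$(flipn n l)) * cmod (v$l))"
proof -
  have r: "Re (complex_of_real a * (z * cnj z)) = a * (cmod z)^2" for z a
    by (simp only: complex_norm_square[symmetric] of_real_mult[symmetric] Re_complex_of_real)
  have "Re (\<Sum>l<2^n. v$(flipn n l) * cnj (v$l)) \<le> (\<Sum>l<2^n. cmod (v$(flipn n l)) * cmod (v$l))"
    unfolding Re_sum by (rule sum_mono) (metis complex_Re_le_cmod complex_mod_cnj norm_mult)
  then show ?thesis unfolding ee_eq plus_complex.sel r by (simp add: distrib_left)
qed

lemma trace_eq:
  assumes rho: "\<rho> = mat (2 ^ n) (2 ^ n) (\<lambda>(i, j). \<Sum>k<K. complex_of_real (p k) * proj (v k) $$ (i, j))"
    and d: "\<forall>k<K. dim_vec (v k) = 2^n"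
  shows "mat_trace (\<rho> * W_se n \<alpha>) = (\<Sum>k<K. complex_of_real (p k) * ee n \<alpha> (v k))"
proof -
  let ?W = "W_se n \<alpha>"
  have dW: "dim_row ?W = 2^n" "dim_col ?W = 2^n"
    by (simp_all add: W_se_def M_Z_def M_X_def tensor_pow_def)
  have e: "(\<rho> * ?W) $$ (i,i) = (\<Sum>l<2^n. (\<Sum>k<K. complex_of_real (p k) * (v k $ i * cnj (v k $ l))) * ?W $$ (l,i))"
    if i: "i < 2^n" for i
  proof -
    have "(\<rho> * ?W) $$ (i,i) = row \<rho> i \<bullet> col ?W i"
      using i rho dW by (simp add: index_mult_mat)
    also have "\<dots> = (\<Sum>l<2^n. \<rho> $$ (i,l) * ?W $$ (l,i))"
      using i rho dW by (simp add: scalar_prod_def lessThan_atLeast0)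
    also have "\<dots> = (\<Sum>l<2^n. (\<Sum>k<K. complex_of_real (p k) * (v k $ i * cnj (v k $ l))) * ?W $$ (l,i))"
      using i rho d by (intro sum.cong) (auto simp: proj_def)
    finally show ?thesis .
  qed
  have "mat_trace (\<rho> * ?W) = (\<Sum>i<2^n. (\<Sum>l<2^n. (\<Sum>k<K. complex_of_real (p k) * (v k $ i * cnj (v k $ l))) * ?W $$ (l,i)))"
  proof -
    have dr: "dim_row (\<rho> * ?W) = 2^n" using rho by simp
    show ?thesis unfolding mat_trace_def dr by (rule sum.cong[OF refl]) (simp add: e)
  qed
  also have "\<dots> = (\<Sum>i<2^n. \<Sum>l<2^n. \<Sum>k<K. complex_of_real (p k) * (v k $ i * cnj (v k $ l) * ?W $$ (l,i)))"
    by (simp add: sum_distrib_right mult.assoc)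
  also have "\<dots> = (\<Sum>i<2^n. \<Sum>k<K. \<Sum>l<2^n. complex_of_real (p k) * (v k $ i * cnj (v k $ l) * ?W $$ (l,i)))"
    by (rule sum.cong[OF refl], rule sum.swap)
  also have "\<dots> = (\<Sum>k<K. \<Sum>i<2^n. \<Sum>l<2^n. complex_of_real (p k) * (v k $ i * cnj (v k $ l) * ?W $$ (l,i)))"
    by (rule sum.swap)
  also have "\<dots> = (\<Sum>k<K. complex_of_real (p k) * ee n \<alpha> (v k))"
    by (simp add: ee_def sum_distrib_left)
  finally show ?thesis .
qed



lemma sep_count:
  assumes sep: "m_separable_pure n m v" and m1: "1 \<le> m"
  shows "(2^m - 2) * (cmod (v$0) * cmod (v$(2^n-1)))
     \<le> (\<Sum>l\<in>{..<2^n} - {0, 2^n-1}. cmod (v$(flipn n l)) * cmod (v$l))"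
proof -
  let ?N = "2^n - 1 :: nat"
  let ?U = "{..<2^n} - {0, ?N} :: nat set"
  let ?a = "\<lambda>l. cmod (v$l)"
  have ex: "\<exists>(G :: nat \<Rightarrow> nat set) (\<phi> :: nat \<Rightarrow> (nat \<Rightarrow> bool) \<Rightarrow> complex).
        (\<forall>j<m. G j \<noteq> {}) \<and>
        (\<forall>j<m. \<forall>j'<m. j \<noteq> j' \<longrightarrow> G j \<inter> G j' = {}) \<and>
        (\<Union>j<m. G j) = {0..<n} \<and>
        (\<forall>x<2 ^ n. v $ x = (\<Prod>j<m. \<phi> j (\<lambda>k. if k \<in> G j then qbit x k else False)))"
    using sep unfolding m_separable_pure_def by (rule conjunct2)
  then obtain G \<phi> where "(\<forall>j<m. G j \<noteq> {}) \<and>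
        (\<forall>j<m. \<forall>j'<m. j \<noteq> j' \<longrightarrow> G j \<inter> G j' = {}) \<and>
        (\<Union>j<m. G j) = {0..<n} \<and>
        (\<forall>x<2 ^ n. v $ x = (\<Prod>j<m. \<phi> j (\<lambda>k. if k \<in> G j then qbit x k else False)))"
    by (elim exE)
  note H = this
  note ne = conjunct1[OF H] and dj = conjunct1[OF conjunct2[OF H]]
    and un = conjunct1[OF conjunct2[OF conjunct2[OF H]]] and vx = conjunct2[OF conjunct2[OF conjunct2[OF H]]]
  define g where "g j b = (\<lambda>k. if k \<in> G j then b else (False::bool))" for j b
  have Gsub: "j < m \<Longrightarrow> k \<in> G j \<Longrightarrow> k < n" for j k using un by auto
  have val: "v$x = (\<Prod>j<m. \<phi> j (g j (b j)))"
    if x: "x < 2^n" and c: "\<forall>j<m. \<forall>k\<in>G j. bit x k = b j" for x b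
  proof -
    have "v$x = (\<Prod>j<m. \<phi> j (\<lambda>k. if k \<in> G j then qbit x k else False))" using vx x by blast
    also have "\<dots> = (\<Prod>j<m. \<phi> j (g j (b j)))"
    proof (rule prod.cong[OF refl])
      fix j assume "j \<in> {..<m}"
      then have "(\<lambda>k. if k \<in> G j then qbit x k else False) = g j (b j)"
        using c by (auto simp: g_def qbit_bit fun_eq_iff)
      then show "\<phi> j (\<lambda>k. if k \<in> G j then qbit x k else False) = \<phi> j (g j (b j))" by simp
    qed
    finally show ?thesis .
  qed
  define xS where "xS S = bnum n (\<lambda>k. \<exists>j\<in>S. k \<in> G j)" for S
  have bxS: "bit (xS S) k \<longleftrightarrow> j \<in> S" if "S \<subseteq> {..<m}" "j < m" "k \<in> G j" for S j k
  proof -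
    have kn: "k < n" using Gsub that by blast
    have "(\<exists>i\<in>S. k \<in> G i) \<longleftrightarrow> j \<in> S"
    proof
      assume "\<exists>i\<in>S. k \<in> G i"
      then obtain i where i: "i \<in> S" "k \<in> G i" by blast
      have "i < m" using i that(1) by auto
      then have "i = j" using dj that(2,3) i(2) by blast
      then show "j \<in> S" using i by simp
    qed (use that in blast)
    then show ?thesis unfolding xS_def bit_bnum using kn by simp
  qed
  have xlt: "xS S < 2^n" for S unfolding xS_def by (rule bnum_lt)
  have bN: "bit ?N k \<longleftrightarrow> k < n" for k by (rule bit_N)
  have v0: "v$0 = (\<Prod>j<m. \<phi> j (g j False))" by (rule val) auto
  have vN: "v$?N = (\<Prod>j<m. \<phi> j (g j True))" by (rule val) (use bN Gsub in auto)
  have vS: "v$(xS S) = (\<Prod>j<m. \<phi> j (g j (j \<in> S)))" if "S \<subseteq> {..<m}" for S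
    using that by (intro val xlt) (auto simp: bxS)
  have vfS: "v$(flipn n (xS S)) = (\<Prod>j<m. \<phi> j (g j (j \<notin> S)))" if "S \<subseteq> {..<m}" for S
  proof (intro val flipn_lt allI impI ballI)
    fix j k assume jm: "j < m" and k: "k \<in> G j"
    show "bit (flipn n (xS S)) k = (j \<notin> S)"
      by (simp add: flipn_def bit_comp'[OF xlt] bxS[OF that jm k] Gsub[OF jm k])
  qed
  have P: "?a (flipn n (xS S)) * ?a (xS S) = ?a 0 * ?a ?N" if "S \<subseteq> {..<m}" for S
  proof -
    have "?a (flipn n (xS S)) * ?a (xS S) = (\<Prod>j<m. cmod (\<phi> j (g j (j \<notin> S))) * cmod (\<phi> j (g j (j \<in> S))))"
      using that by (simp add: vS vfS prod_norm prod.distrib)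
    also have "\<dots> = (\<Prod>j<m. cmod (\<phi> j (g j False)) * cmod (\<phi> j (g j True)))"
      by (rule prod.cong[OF refl]) (case_tac "x \<in> S", simp_all)
    also have "\<dots> = ?a 0 * ?a ?N"
      by (simp only: v0 vN prod_norm prod.distrib)
    finally show ?thesis .
  qed
  define Q where "Q = Pow {..<m} - {{}, {..<m}}"
  have cQ: "card Q = 2^m - 2"
  proof -
    have "{{}, {..<m}} \<subseteq> Pow {..<m}" by auto
    moreover have "card {{}, {..<m::nat}} = 2"
    proof -
      have "(0::nat) \<in> {..<m}" using m1 by simp
      then have "{} \<noteq> {..<m::nat}" by blast
      then show ?thesis by simp
    qed
    ultimately show ?thesis unfolding Q_def by (simp add: card_Diff_subset card_Pow)
  qed
  have inj: "inj_on xS Q"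
  proof (rule inj_onI)
    fix S S' assume S: "S \<in> Q" and S': "S' \<in> Q" and eq: "xS S = xS S'"
    show "S = S'"
    proof (rule ccontr)
      assume "S \<noteq> S'"
      then obtain j where j0: "(j \<in> S) \<noteq> (j \<in> S')" by blast
      have "S \<subseteq> {..<m}" "S' \<subseteq> {..<m}" using S S' unfolding Q_def by auto
      then have j: "j < m" "(j \<in> S) \<noteq> (j \<in> S')" using j0 by auto
      then obtain k where k: "k \<in> G j" using ne by blast
      have "bit (xS S) k \<noteq> bit (xS S') k" using bxS[of S j k] bxS[of S' j k] S S' j k unfolding Q_def by auto
      then show False using eq by simp
    qed
  qed
  have sub: "xS ` Q \<subseteq> ?U"
  proof
    fix x assume "x \<in> xS ` Q"
    then obtain S where S: "S \<in> Q" and x: "x = xS S" by blast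
    have Sm: "S \<subseteq> {..<m}" "S \<noteq> {}" "S \<noteq> {..<m}" using S unfolding Q_def by simp_all
    obtain j where j: "j \<in> S" using Sm by blast
    then obtain k where k: "k \<in> G j" using ne Sm by blast
    have "bit x k" using bxS[of S j k] Sm j k x by auto
    then have x0: "x \<noteq> 0" by (metis bit_iff_odd div_0 even_zero)
    obtain j' where j': "j' < m" "j' \<notin> S" using Sm(1,3) by auto
    then obtain k' where k': "k' \<in> G j'" using ne by blast
    have "\<not> bit x k'" using bxS[of S j' k'] Sm j' k' x by auto
    moreover have "bit ?N k'" using bN Gsub j' k' by blast
    ultimately have "x \<noteq> ?N" by auto
    then show "x \<in> ?U" using x0 x xlt by auto
  qed
  have "(\<Sum>l\<in>xS ` Q. ?a (flipn n l) * ?a l) \<le> (\<Sum>l\<in>?U. ?a (flipn n l) * ?a l)"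
    by (rule sum_mono2) (use sub in auto)
  moreover have "(\<Sum>l\<in>xS ` Q. ?a (flipn n l) * ?a l) = (\<Sum>S\<in>Q. ?a (flipn n (xS S)) * ?a (xS S))"
    by (simp add: sum.reindex[OF inj])
  moreover have "\<dots> = (\<Sum>S\<in>Q. ?a 0 * ?a ?N)"
    by (rule sum.cong[OF refl]) (simp add: P Q_def)
  moreover have "\<dots> = (2^m - 2) * (?a 0 * ?a ?N)"
  proof -
    have two: "(2::nat) \<le> 2^m" using power_increasing[of 1 m "2::nat"] m1 by simp
    have "real (2^m - 2) = 2^m - 2" using two by (simp add: of_nat_diff)
    then show ?thesis using cQ by simp
  qed
  ultimately show ?thesis by linarith
qed



lemma arith_final:
  fixes \<alpha> Z P T S q :: real
  assumes "Z + S = 1" "T \<le> S" "0 \<le> T" "0 \<le> P" "2 * P \<le> Z" "4 \<le> q" "(q - 2) * P \<le> T"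
    "0 < \<alpha>" "\<alpha> \<le> 2"
  shows "\<alpha> * Z + 2 * P + T \<le> max \<alpha> (2 * \<alpha> / q + 1)"
proof -
  define c where "c = 2 / q"
  have c0: "0 < c" "c \<le> 1/2" using assms(6) unfolding c_def by (auto simp: field_simps)
  define Y where "Y = 2 * P + T"
  have Y1: "Y \<le> 1" "0 \<le> Y" using assms unfolding Y_def by linarith+
  have key: "(1 - c) * Y \<le> T"
  proof -
    have "(q - 2) * (2 * P + T) \<le> q * T" using assms(7) by (simp add: algebra_simps)
    then have "(q - 2) / q * (2 * P + T) \<le> T" using assms(6) by (simp add: field_simps)
    moreover have "(q - 2) / q = 1 - c" using assms(6) unfolding c_def by (simp add: field_simps)
    ultimately show ?thesis unfolding Y_def by simp
  qed
  have f: "\<alpha> * Z + 2 * P + T \<le> \<alpha> + Y * (1 - \<alpha> + \<alpha> * c)"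
  proof -
    have "\<alpha> * Z \<le> \<alpha> * (1 - T)" using assms(1,2,8) by (intro mult_left_mono) auto
    also have "\<dots> \<le> \<alpha> * (1 - (1 - c) * Y)" using key assms(8) by (intro mult_left_mono) auto
    finally show ?thesis unfolding Y_def by (simp add: algebra_simps)
  qed
  have "2 * \<alpha> / q = \<alpha> * c" unfolding c_def by simp
  show ?thesis
  proof (cases "1 - \<alpha> + \<alpha> * c \<le> 0")
    case True
    then have "Y * (1 - \<alpha> + \<alpha> * c) \<le> 0" using Y1 by (simp add: mult_nonneg_nonpos)
    then show ?thesis using f by linarith
  next
    case False
    then have "Y * (1 - \<alpha> + \<alpha> * c) \<le> 1 * (1 - \<alpha> + \<alpha> * c)" using Y1 by (intro mult_right_mono) auto
    then have "\<alpha> * Z + 2 * P + T \<le> \<alpha> + (1 - \<alpha> + \<alpha> * c)" using f by simp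
    also have "\<dots> = 2 * \<alpha> / q + 1" using \<open>2 * \<alpha> / q = \<alpha> * c\<close> by simp
    finally have "\<alpha> * Z + 2 * P + T \<le> 2 * \<alpha> / q + 1" .
    then show ?thesis by (simp add: le_max_iff_disj)
  qed
qed

lemma sum_ins2: "finite U \<Longrightarrow> x \<noteq> y \<Longrightarrow> x \<notin> U \<Longrightarrow> y \<notin> U \<Longrightarrow>
  (\<Sum>l\<in>insert x (insert y U). f l) = f x + f y + sum f U"
  by (simp add: add.assoc)

lemma pure_bound:
  assumes sep: "m_separable_pure n m v" and n1: "1 \<le> n" and m2: "2 \<le> m"
    and al: "0 < \<alpha>" "\<alpha> \<le> 2"
  shows "Re (ee n \<alpha> v) \<le> max \<alpha> (\<alpha> / 2 ^ (m - 1) + 1)"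
proof -
  let ?N = "2^n - 1 :: nat"
  let ?U = "{..<2^n} - {0, ?N} :: nat set"
  define a where "a l = cmod (v$l)" for l
  have norm1: "(\<Sum>l<2^n. (a l)^2) = 1" using sep unfolding m_separable_pure_def pure_state_def a_def by blast
  have two: "(2::nat) \<le> 2^n" using power_increasing[of 1 n "2::nat"] n1 by simp
  have N0: "0 \<noteq> ?N" using two by simp
  have Nl: "?N < 2^n" by simp
  have dec: "{..<2^n} = insert 0 (insert ?N ?U)" using Nl by auto
  have f0: "flipn n 0 = ?N" by (simp add: flipn_def)
  have fN: "flipn n ?N = 0" by (simp add: flipn_def)
  have ff: "flipn n (flipn n l) = l" if "l < 2^n" for l using that by (simp add: flipn_def)
  have fU: "flipn n l \<in> ?U" if "l \<in> ?U" for l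
    using that by (auto simp: flipn_def)
  have ff': "flipn n (flipn n l) = l" if "l \<in> ?U" for l using that ff by blast
  define S where "S = (\<Sum>l\<in>?U. (a l)^2)"
  define T where "T = (\<Sum>l\<in>?U. a (flipn n l) * a l)"
  have si: "(\<Sum>l<2^n. f l) = f 0 + f ?N + sum f ?U" for f :: "nat \<Rightarrow> real"
  proof -
    have "(\<Sum>l<2^n. f l) = sum f (insert 0 (insert ?N ?U))" using dec by (rule arg_cong)
    also have "\<dots> = f 0 + f ?N + sum f ?U" by (rule sum_ins2) (use N0 in auto)
    finally show ?thesis .
  qed
  have sumsq: "(a 0)^2 + (a ?N)^2 + S = 1"
    using norm1 unfolding si[of "\<lambda>l. (a l)^2"] S_def .
  have sumx: "(\<Sum>l<2^n. a (flipn n l) * a l) = 2 * (a 0 * a ?N) + T"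
    unfolding si[of "\<lambda>l. a (flipn n l) * a l"] T_def f0 fN by simp
  have refl: "(\<Sum>l\<in>?U. (a (flipn n l))^2) = S"
    unfolding S_def
    by (rule sum.reindex_bij_witness[where i = "flipn n" and j = "flipn n"]) (simp_all only: ff' fU)
  have TS: "T \<le> S"
  proof -
    have "T \<le> (\<Sum>l\<in>?U. ((a (flipn n l))^2 + (a l)^2) / 2)"
      unfolding T_def
    proof (rule sum_mono)
      fix l
      have "2 * a (flipn n l) * a l \<le> (a (flipn n l))^2 + (a l)^2" by (rule sum_squares_bound)
      then show "a (flipn n l) * a l \<le> ((a (flipn n l))^2 + (a l)^2) / 2" by (simp add: mult.assoc)
    qed
    also have "\<dots> = ((\<Sum>l\<in>?U. (a (flipn n l))^2) + (\<Sum>l\<in>?U. (a l)^2)) / 2"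
      by (simp only: sum.distrib[symmetric] sum_divide_distrib[symmetric])
    also have "\<dots> = S" using refl unfolding S_def by simp
    finally show ?thesis .
  qed
  have T0: "0 \<le> T" unfolding T_def a_def by (intro sum_nonneg) simp
  have P0: "0 \<le> a 0 * a ?N" unfolding a_def by simp
  have PZ: "2 * (a 0 * a ?N) \<le> (a 0)^2 + (a ?N)^2" using sum_squares_bound[of "a 0" "a ?N"] by (simp only: mult.assoc)
  have cnt: "(2^m - 2) * (a 0 * a ?N) \<le> T"
    using sep_count[OF sep] m2 unfolding T_def a_def by simp
  have q: "(4::real) \<le> 2^m" using power_increasing[of 2 m "2::real"] m2 by simp
  have Re: "Re (ee n \<alpha> v) \<le> \<alpha> * ((a 0)^2 + (a ?N)^2) + (2 * (a 0 * a ?N) + T)"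
    using Re_ee[of n \<alpha> v] sumx unfolding a_def by simp
  have fin: "\<alpha> * ((a 0)^2 + (a ?N)^2) + 2 * (a 0 * a ?N) + T \<le> max \<alpha> (2 * \<alpha> / 2^m + 1)"
    by (rule arith_final[OF _ TS T0 P0 PZ q cnt al]) (use sumsq in simp)
  have e: "2 * \<alpha> / 2^m = \<alpha> / 2 ^ (m - 1)"
  proof -
    have "(2::real)^m = 2 * 2^(m-1)" using m2 by (metis Suc_diff_1 less_le_trans pos2 power_Suc zero_less_numeral)
    then show ?thesis by simp
  qed
  show ?thesis using Re fin unfolding e by simp
qed

theorem mainTheorem1:
  fixes n m :: nat and \<alpha> :: real and \<rho> :: "complex mat"
  assumes "n \<ge> 2" and "2 \<le> m" and "m \<le> n"
    and "0 < \<alpha>" and "\<alpha> \<le> 2"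
    and "m_separable n m \<rho>"
  shows "Re (mat_trace (\<rho> * W_se n \<alpha>)) \<le> max \<alpha> (\<alpha> / 2 ^ (m - 1) + 1)"
proof -
  obtain K p v where H: "(\<forall>k<(K::nat). p k \<ge> 0) \<and> (\<Sum>k<K. p k) = 1 \<and>
        (\<forall>k<K. m_separable_pure n m (v k)) \<and>
        \<rho> = mat (2 ^ n) (2 ^ n) (\<lambda>(i, j). \<Sum>k<K. complex_of_real (p k) * proj (v k) $$ (i, j))"
    using assms(6) unfolding m_separable_def by (elim exE)
  note p0 = conjunct1[OF H] and p1 = conjunct1[OF conjunct2[OF H]]
    and sv = conjunct1[OF conjunct2[OF conjunct2[OF H]]] and rho = conjunct2[OF conjunct2[OF conjunct2[OF H]]]
  let ?M = "max \<alpha> (\<alpha> / 2 ^ (m - 1) + 1)"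
  have d: "\<forall>k<K. dim_vec (v k) = 2^n" using sv unfolding m_separable_pure_def pure_state_def by blast
  have "Re (mat_trace (\<rho> * W_se n \<alpha>)) = (\<Sum>k<K. p k * Re (ee n \<alpha> (v k)))"
    unfolding trace_eq[OF rho d] Re_sum by simp
  also have "\<dots> \<le> (\<Sum>k<K. p k * ?M)"
  proof (rule sum_mono)
    fix k assume "k \<in> {..<K}"
    then have "Re (ee n \<alpha> (v k)) \<le> ?M" "0 \<le> p k"
      using pure_bound[of n m "v k" \<alpha>] sv p0 assms(1,2,4,5) by auto
    then show "p k * Re (ee n \<alpha> (v k)) \<le> p k * ?M" by (rule mult_left_mono)
  qed
  also have "\<dots> = ?M" using p1 by (simp add: sum_distrib_right[symmetric])
  finally show ?thesis .
qed

end
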